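(* Let $M$ be a smooth manifold, $(\mathbf{J}_1,\mathbf{J}_2)$ a generalized Kähler structure with associated bihermitian data $(g,b,I,J)$, and $K\in\Lambda^2T^*M$ a real 2-form. Then $[\Phi_K(\mathbf{J}_1),\mathbf{J}_2]=[\Phi_K(\mathbf{J}_2),\mathbf{J}_1]$ if and only if $K\in\Lambda^{1,1}_J$ (equivalently $KJ=-J^*K$ as maps $T\to T^*$).
   Context: A generalized Kähler structure is a pair of commuting integrable generalized complex structures $(\mathbf{J}_1,\mathbf{J}_2)$ on $T\oplus T^*$ (w.r.t. an $H$-twisted Courant bracket) such that $\langle -\mathbf{J}_1\mathbf{J}_2\cdot,\cdot\rangle$ is positive definite, $\langle X+\xi,Y+\eta\rangle=\tfrac12(\xi(Y)+\eta(X))$. It corresponds to bihermitian data $(g,b,I,J)$ via the Gualtieri map $\mathbf{J}_{1/2}=\tfrac12 e^b\begin{pmatrix} I\pm J & -(\omega_I^{-1}\mp\omega_J^{-1})\\ \omega_I\mp\omega_J & -(I^*\pm J^* )\end{pmatrix}e^{-b}$, with $\omega_I=gI$, $\omega_J=gJ$ as maps $T\to T^*$. For a 2-form $K$, $e^K(X+\xi)=X+\xi+K(X,\cdot)$ and $\Phi_K(\mathbf{J})=[\mathbf{J},e^K\mathbf{J}]$. $\Lambda^{1,1}_J$ is the space of real 2-forms with $K(JX,JY)=K(X,Y)$. *)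

theory Defs
  imports "HOL-Analysis.Analysis"
begin

text \<open>Pointwise (fibrewise) linear algebra at a point of M.
  T = real^'n, T* = real^'n (covectors, pairing xi(Y) = xi \<bullet> Y).
  Sections of T + T* at a point are pairs (X, xi).\<close>

type_synonym ('n) gvec = "(real^'n) \<times> (real^'n)"

definition bform :: "real^'n::finite^'n \<Rightarrow> real^'n \<Rightarrow> real^'n \<Rightarrow> real" where
  "bform B X Y = X \<bullet> (B *v Y)"

text \<open>flat B : T -> T*, X |-> B(X,.)\<close>
definition flat :: "real^'n::finite^'n \<Rightarrow> real^'n \<Rightarrow> real^'n" where
  "flat B X = transpose B *v X"

text \<open>dual map A^* : T* -> T*, xi |-> xi o A\<close>
definition dualmap :: "real^'n::finite^'n \<Rightarrow> real^'n \<Rightarrow> real^'n" where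
  "dualmap A xi = transpose A *v xi"

definition bexp :: "real^'n::finite^'n \<Rightarrow> ('n::finite) gvec \<Rightarrow> ('n::finite) gvec" where
  "bexp B v = (fst v, snd v + flat B (fst v))"

text \<open>omega_I = g I as a map T -> T*, as a matrix: X |-> g(IX,.)\<close>
definition omega :: "real^'n::finite^'n \<Rightarrow> real^'n^'n \<Rightarrow> real^'n^'n" where
  "omega g I = transpose g ** I"

text \<open>Gualtieri map (the upper sign gives J_1, the lower sign J_2).\<close>
definition gualt1 :: "real^'n::finite^'n \<Rightarrow> real^'n^'n \<Rightarrow> real^'n^'n \<Rightarrow> real^'n^'n \<Rightarrow> ('n::finite) gvec \<Rightarrow> ('n::finite) gvec" where
  "gualt1 g b I J = bexp b \<circ>
     (\<lambda>v. (1/2) *\<^sub>R ((I + J) *v fst v - (matrix_inv (omega g I) - matrix_inv (omega g J)) *v snd v,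
                     (omega g I - omega g J) *v fst v - (dualmap I (snd v) + dualmap J (snd v))))
     \<circ> bexp (- b)"

definition gualt2 :: "real^'n::finite^'n \<Rightarrow> real^'n^'n \<Rightarrow> real^'n^'n \<Rightarrow> real^'n^'n \<Rightarrow> ('n::finite) gvec \<Rightarrow> ('n::finite) gvec" where
  "gualt2 g b I J = bexp b \<circ>
     (\<lambda>v. (1/2) *\<^sub>R ((I - J) *v fst v - (matrix_inv (omega g I) + matrix_inv (omega g J)) *v snd v,
                     (omega g I + omega g J) *v fst v - (dualmap I (snd v) - dualmap J (snd v))))
     \<circ> bexp (- b)"

definition comm :: "(('n::finite) gvec \<Rightarrow> ('n::finite) gvec) \<Rightarrow> (('n::finite) gvec \<Rightarrow> ('n::finite) gvec) \<Rightarrow> ('n::finite) gvec \<Rightarrow> ('n::finite) gvec" where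
  "comm A B = (\<lambda>v. A (B v) - B (A v))"

definition PhiK :: "real^'n::finite^'n \<Rightarrow> (('n::finite) gvec \<Rightarrow> ('n::finite) gvec) \<Rightarrow> ('n::finite) gvec \<Rightarrow> ('n::finite) gvec" where
  "PhiK K A = comm A (bexp K \<circ> A)"

definition two_form :: "real^'n::finite^'n \<Rightarrow> bool" where
  "two_form K \<longleftrightarrow> transpose K = - K"

definition Lambda11 :: "real^'n::finite^'n \<Rightarrow> (real^'n^'n) set" where
  "Lambda11 J = {K. two_form K \<and> (\<forall>X Y. bform K (J *v X) (J *v Y) = bform K X Y)}"

definition bihermitian :: "real^'n::finite^'n \<Rightarrow> real^'n^'n \<Rightarrow> real^'n^'n \<Rightarrow> real^'n^'n \<Rightarrow> bool" where
  "bihermitian g b I J \<longleftrightarrow>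
     transpose g = g \<and> (\<forall>X. X \<noteq> 0 \<longrightarrow> bform g X X > 0) \<and> two_form b \<and>
     I ** I = - mat 1 \<and> J ** J = - mat 1 \<and>
     (\<forall>X Y. bform g (I *v X) (I *v Y) = bform g X Y) \<and>
     (\<forall>X Y. bform g (J *v X) (J *v Y) = bform g X Y)"

end

theory Submission imports Defs begin
declare transpose_matrix_vector[simp del]
lemma mv_neg[simp]: "(A::real^'n::finite^'m::finite) *v (- x) = - (A *v x)"
  by (simp add: vec_eq_iff matrix_vector_mult_def sum_negf)
lemma mv_negm[simp]: "(- A::real^'n::finite^'m::finite) *v x = - (A *v x)"
  by (simp add: vec_eq_iff matrix_vector_mult_def sum_negf)
lemma transpose_neg[simp]: "transpose (- A::real^'n::finite^'m::finite) = - transpose A"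
  by (simp add: vec_eq_iff transpose_def)
lemma inner_transp: "inner ((A::real^'n::finite^'m::finite) *v x) y = inner x (transpose A *v y)"
  by (metis dot_lmul_matrix inner_commute transpose_matrix_vector)
lemma inv_unique: assumes "(A::real^'n::finite^'n) ** B = mat 1" "B ** A = mat 1"
  shows "matrix_inv A = B"
proof -
  have "\<exists>C. A ** C = mat 1 \<and> C ** A = mat 1" using assms by blast
  then have C: "A ** matrix_inv A = mat 1 \<and> matrix_inv A ** A = mat 1"
    unfolding matrix_inv_def by (rule someI_ex)
  have "matrix_inv A = matrix_inv A ** (A ** B)" using assms by simp
  also have "\<dots> = B" using C by (simp add: matrix_mul_assoc)
  finally show ?thesis .
qed
lemma mulI: "(A::real^'n::finite^'n) ** B = mat 1 \<Longrightarrow> A *v (B *v x) = x"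
  by (metis matrix_vector_mul_assoc matrix_vector_mul_lid)

definition SS :: "real^'n::finite^'n \<Rightarrow> real^'n^'n \<Rightarrow> real^'n \<Rightarrow> real^'n \<Rightarrow> 'n gvec" where
  "SS g b u w = bexp b ((1/2) *\<^sub>R (u + w), (1/2) *\<^sub>R (g *v (u - w)))"

lemma inv_vec_eq: assumes "\<And>y. (A::real^'n::finite^'n) *v (B *v y) = y" shows "A ** B = mat 1"
  using assms by (simp add: matrix_eq matrix_vector_mul_assoc[symmetric])

lemma herm_facts:
  fixes g I :: "real^'n::finite^'n"
  assumes gs: "transpose g = g" and Ivv: "\<And>x. I *v (I *v x) = - x"
    and inv: "\<And>X Y. bform g (I *v X) (I *v Y) = bform g X Y"
    and gh: "\<And>x. g *v (h *v x) = x" and hg: "\<And>x. h *v (g *v x) = x"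
  shows "transpose I *v (g *v y) = - (g *v (I *v y))"
    and "matrix_inv (omega g I) *v (g *v y) = - (I *v y)"
proof -
  have a: "transpose I *v (g *v (I *v z)) = g *v z" for z
  proof -
    have "\<forall>X. inner X (transpose I *v (g *v (I *v z)) - g *v z) = 0"
      using inv by (simp add: bform_def inner_transp inner_diff_right)
    then show ?thesis by (metis inner_eq_zero_iff eq_iff_diff_eq_0)
  qed
  show t: "transpose I *v (g *v y) = - (g *v (I *v y))"
    using a[of "I *v y"] Ivv[of y] by (metis minus_minus mv_neg)
  have om: "omega g I = g ** I" using gs by (simp add: omega_def)
  have "matrix_inv (omega g I) = - (I ** h)"
    unfolding om
    by (rule inv_unique; rule inv_vec_eq; simp add: matrix_vector_mul_assoc[symmetric] Ivv gh hg)
  then show "matrix_inv (omega g I) *v (g *v y) = - (I *v y)"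
    by (simp add: matrix_vector_mul_assoc[symmetric] hg)
qed

lemmas lin = matrix_vector_right_distrib matrix_vector_mult_diff_distrib matrix_vector_mult_scaleR
  matrix_vector_mult_add_rdistrib matrix_vector_mult_diff_rdistrib scaleR_right_distrib scaleR_right_diff_distrib

lemma SS_diff: "SS g b u w - SS g b u' w' = SS g b (u - u') (w - w')"
  by (simp add: SS_def bexp_def flat_def algebra_simps)

lemma G12:
  fixes g b I J :: "real^'n::finite^'n"
  assumes Ivv: "\<And>x. I *v (I *v x) = - x" and Jvv: "\<And>x. J *v (J *v x) = - x"
    and TI: "\<And>y. transpose I *v (g *v y) = - (g *v (I *v y))"
    and TJ: "\<And>y. transpose J *v (g *v y) = - (g *v (J *v y))"
    and MI: "\<And>y. matrix_inv (omega g I) *v (g *v y) = - (I *v y)"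
    and MJ: "\<And>y. matrix_inv (omega g J) *v (g *v y) = - (J *v y)"
    and gs: "transpose g = g"
  shows "gualt1 g b I J (SS g b u w) = SS g b (I *v u) (J *v w)"
    and "gualt2 g b I J (SS g b u w) = SS g b (I *v u) (- (J *v w))"
proof -
  have om: "omega g A *v x = g *v (A *v x)" for A x using gs by (simp add: omega_def matrix_vector_mul_assoc)
  show "gualt1 g b I J (SS g b u w) = SS g b (I *v u) (J *v w)"
    unfolding gualt1_def SS_def
    by (simp add: bexp_def flat_def dualmap_def lin TI TJ MI MJ om;
      simp add: vec_eq_iff field_simps)
  show "gualt2 g b I J (SS g b u w) = SS g b (I *v u) (- (J *v w))"
    unfolding gualt2_def SS_def
    by (simp add: bexp_def flat_def dualmap_def lin TI TJ MI MJ om;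
      simp add: vec_eq_iff field_simps)
qed

lemma EK:
  fixes g b K :: "real^'n::finite^'n"
  assumes gh: "\<And>x. g *v (h *v x) = x"
  shows "bexp K (SS g b u w) = SS g b (u + (1/2) *\<^sub>R ((h ** transpose K) *v (u + w)))
            (w - (1/2) *\<^sub>R ((h ** transpose K) *v (u + w)))"
  unfolding SS_def
  by (simp add: bexp_def flat_def algebra_simps matrix_vector_mul_assoc[symmetric] gh)

lemma Dlemma:
  fixes I J M :: "real^'n::finite^'n" and A1 A2 E :: "'n gvec \<Rightarrow> 'n gvec"
  assumes Ivv: "\<And>x. I *v (I *v x) = - x" and Jvv: "\<And>x. J *v (J *v x) = - x"
    and A1: "\<And>u w. A1 (SS g b u w) = SS g b (I *v u) (J *v w)"
    and A2: "\<And>u w. A2 (SS g b u w) = SS g b (I *v u) (- (J *v w))"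
    and E: "\<And>u w. E (SS g b u w) = SS g b (u + (1/2) *\<^sub>R (M *v (u + w))) (w - (1/2) *\<^sub>R (M *v (u + w)))"
  shows "comm (comm A1 (E \<circ> A1)) A2 (SS g b u w) - comm (comm A2 (E \<circ> A2)) A1 (SS g b u w)
       = SS g b 0 (2 *\<^sub>R (M *v (J *v w) - J *v (M *v w)))"
proof -
  have c: "SS g b x y = SS g b x' y'" if "x = x'" "y = y'" for x y x' y' using that by simp
  show ?thesis
    unfolding comm_def o_def
    apply (simp add: A1 A2 E SS_diff)
    apply (rule c)
     apply (simp_all add: lin Ivv Jvv)
     apply (simp_all add: vec_eq_iff field_simps)
    done
qed

lemma eq_by_inner: "(\<And>X. inner X (a::real^'n::finite) = inner X c) \<Longrightarrow> a = c"
  by (metis inner_eq_zero_iff eq_iff_diff_eq_0 inner_diff_right diff_self)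

theorem proposition3p3:
  fixes g b I J K :: "real^'n^'n"
  assumes "bihermitian g b I J"
    and "two_form K"
  shows "(comm (PhiK K (gualt1 g b I J)) (gualt2 g b I J)
             = comm (PhiK K (gualt2 g b I J)) (gualt1 g b I J)
           \<longleftrightarrow> K \<in> Lambda11 J)
       \<and> (K \<in> Lambda11 J \<longleftrightarrow> flat K \<circ> (\<lambda>X. J *v X) = (\<lambda>X. - dualmap J (flat K X)))"
proof -
  have gs: "transpose g = g" and gpos: "\<And>X. X \<noteq> 0 \<Longrightarrow> bform g X X > 0"
    and II: "I ** I = - mat 1" and JJ: "J ** J = - mat 1"
    and Ig: "\<And>X Y. bform g (I *v X) (I *v Y) = bform g X Y"
    and Jg: "\<And>X Y. bform g (J *v X) (J *v Y) = bform g X Y"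
    using assms(1) unfolding bihermitian_def by auto
  have KT: "transpose K = - K" using assms(2) by (simp add: two_form_def)
  have Ivv: "I *v (I *v x) = - x" for x using II by (simp add: matrix_vector_mul_assoc)
  have Jvv: "J *v (J *v x) = - x" for x using JJ by (simp add: matrix_vector_mul_assoc)
  have "\<forall>x. g *v x = 0 \<longrightarrow> x = 0"
  proof (intro allI impI)
    fix x assume "g *v x = 0"
    then have "bform g x x = 0" by (simp add: bform_def)
    then show "x = 0" using gpos by (metis less_irrefl)
  qed
  then obtain h where hg0: "h ** g = mat 1" using matrix_left_invertible_ker by blast
  then have gh0: "g ** h = mat 1" using matrix_left_right_inverse by blast
  have hg: "h *v (g *v x) = x" for x using hg0 by (rule mulI)
  have gh: "g *v (h *v x) = x" for x using gh0 by (rule mulI)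
  note hI = herm_facts[of g I h, OF gs Ivv Ig gh hg]
  note hJ = herm_facts[of g J h, OF gs Jvv Jg gh hg]
  note G = G12[of I J g, OF Ivv Jvv hI(1) hJ(1) hI(2) hJ(2) gs]
  define M where "M = h ** transpose K"
  note E = EK[of g h K b, OF gh, folded M_def]
  define L where "L = comm (PhiK K (gualt1 g b I J)) (gualt2 g b I J)"
  define R where "R = comm (PhiK K (gualt2 g b I J)) (gualt1 g b I J)"
  have D: "L (SS g b u w) - R (SS g b u w) = SS g b 0 (2 *\<^sub>R (M *v (J *v w) - J *v (M *v w)))" for u w
    unfolding L_def R_def PhiK_def
    by (rule Dlemma[OF Ivv Jvv G(1) G(2) E])
  have surj: "\<exists>u w. v = SS g b u w" for v
  proof -
    obtain X \<xi> where v: "v = (X, \<xi>)" by fastforce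
    define Y where "Y = h *v (\<xi> - transpose b *v X)"
    have e1: "(1/2) *\<^sub>R ((X + Y) + (X - Y)) = X" by (simp add: vec_eq_iff)
    have e2: "(1/2) *\<^sub>R ((X + Y) - (X - Y)) = Y" by (simp add: vec_eq_iff)
    have "SS g b (X + Y) (X - Y) = v"
      unfolding SS_def bexp_def e1 e2 v
      by (simp add: flat_def Y_def gh matrix_vector_mult_scaleR[symmetric])
    then show ?thesis by metis
  qed
  have SS00: "SS g b 0 0 = 0" by (simp add: SS_def bexp_def flat_def zero_prod_def)
  have SS0: "SS g b 0 y = 0 \<Longrightarrow> y = 0" for y
  proof -
    assume "SS g b 0 y = 0"
    then have "(1/2) *\<^sub>R (g *v (- y)) = 0" by (simp add: SS_def bexp_def flat_def zero_prod_def)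
    then have "g *v y = 0" by simp
    then have "h *v (g *v y) = 0" by simp
    then show "y = 0" by (simp add: hg)
  qed
  have C1: "L = R \<longleftrightarrow> (\<forall>w. M *v (J *v w) = J *v (M *v w))"
  proof
    assume "L = R"
    show "\<forall>w. M *v (J *v w) = J *v (M *v w)"
    proof
      fix w
      have "SS g b 0 (2 *\<^sub>R (M *v (J *v w) - J *v (M *v w))) = 0"
        using D[of 0 w] \<open>L = R\<close> by simp
      then have "2 *\<^sub>R (M *v (J *v w) - J *v (M *v w)) = 0" by (rule SS0)
      then show "M *v (J *v w) = J *v (M *v w)" by simp
    qed
  next
    assume H: "\<forall>w. M *v (J *v w) = J *v (M *v w)"
    show "L = R"
    proof
      fix v
      obtain u w where v: "v = SS g b u w" using surj by blast
      have "L v - R v = 0" using D[of u w] H SS00 v by simp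
      then show "L v = R v" by simp
    qed
  qed
  define C where "C = (\<forall>x. K *v (J *v x) = - (transpose J *v (K *v x)))"
  have gJ: "g *v (J *v y) = - (transpose J *v (g *v y))" for y using hJ(1)[of y] by simp
  have C2: "(\<forall>w. M *v (J *v w) = J *v (M *v w)) \<longleftrightarrow> C"
  proof
    assume H: "\<forall>w. M *v (J *v w) = J *v (M *v w)"
    show C unfolding C_def
    proof
      fix x
      have "h *v (K *v (J *v x)) = J *v (h *v (K *v x))"
        using H[rule_format, of x] by (simp add: M_def KT matrix_vector_mul_assoc[symmetric])
      then have "g *v (h *v (K *v (J *v x))) = g *v (J *v (h *v (K *v x)))" by simp
      then show "K *v (J *v x) = - (transpose J *v (K *v x))" by (simp add: gh gJ)
    qed
  next
    assume H: C
    show "\<forall>w. M *v (J *v w) = J *v (M *v w)"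
    proof
      fix w
      have "K *v (J *v w) = g *v (J *v (h *v (K *v w)))"
        using H unfolding C_def by (simp add: gh gJ)
      then have "h *v (K *v (J *v w)) = J *v (h *v (K *v w))" by (simp add: hg)
      then show "M *v (J *v w) = J *v (M *v w)"
        by (simp add: M_def KT matrix_vector_mul_assoc[symmetric])
    qed
  qed
  have JTT: "transpose J *v (transpose J *v z) = - z" for z
  proof (rule eq_by_inner)
    fix X
    have "inner X (transpose J *v (transpose J *v z)) = inner (J *v X) (transpose J *v z)"
      by (simp add: inner_transp)
    also have "\<dots> = inner (J *v (J *v X)) z" by (simp add: inner_transp)
    also have "\<dots> = inner X (- z)" by (simp add: Jvv)
    finally show "inner X (transpose J *v (transpose J *v z)) = inner X (- z)" .
  qed
  have C3: "K \<in> Lambda11 J \<longleftrightarrow> C"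
  proof -
    have "K \<in> Lambda11 J \<longleftrightarrow> (\<forall>Y. transpose J *v (K *v (J *v Y)) = K *v Y)"
    proof
      assume "K \<in> Lambda11 J"
      then have H: "\<And>X Y. inner X (transpose J *v (K *v (J *v Y))) = inner X (K *v Y)"
        by (simp add: Lambda11_def bform_def inner_transp)
      show "\<forall>Y. transpose J *v (K *v (J *v Y)) = K *v Y" using H eq_by_inner by blast
    next
      assume "\<forall>Y. transpose J *v (K *v (J *v Y)) = K *v Y"
      then show "K \<in> Lambda11 J" using assms(2)
        by (simp add: Lambda11_def bform_def inner_transp)
    qed
    also have "\<dots> \<longleftrightarrow> C"
    proof
      assume H: "\<forall>Y. transpose J *v (K *v (J *v Y)) = K *v Y"
      show C unfolding C_def
      proof
        fix x
        show "K *v (J *v x) = - (transpose J *v (K *v x))"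
          using H[rule_format, of "J *v x"] by (simp add: Jvv)
      qed
    next
      assume C
      then show "\<forall>Y. transpose J *v (K *v (J *v Y)) = K *v Y"
        unfolding C_def by (simp add: JTT)
    qed
    finally show ?thesis .
  qed
  have C4: "(flat K \<circ> (\<lambda>X. J *v X) = (\<lambda>X. - dualmap J (flat K X))) \<longleftrightarrow> C"
    unfolding C_def by (simp add: fun_eq_iff flat_def dualmap_def KT) (metis minus_minus)
  show ?thesis using C1 C2 C3 C4 unfolding L_def R_def by blast
qed
end
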